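(* Let $\omega\in S_n$ and $1\le i<j\le n$ with $c_i(\omega),c_j(\omega)>0$, and let $a\in[c_i(\omega)]$, $b\in[c_j(\omega)]$ with $m_{i,a}(\omega)>m_{j,b}(\omega)$. (1) If $a,b\ge 2$, then $m_{i,a-1}(\omega)>m_{j,b-1}(\omega)$. (2) If $a<c_i(\omega)$ and $b<c_j(\omega)$, then $m_{i,a+1}(\omega)>m_{j,b+1}(\omega)$.
   Context: Permutations $\omega\in S_n$ are written in one-line notation. Let ${\rm Inv}(\omega)=\{(i,j): 1\le i<j\le n,\ \omega(i)>\omega(j)\}$, $c_i(\omega)=\#\{j: i<j\le n,\ \omega(i)>\omega(j)\}$, and for $i<j$, $c_{i,j}(\omega)=\#\{k: i<k<j,\ \omega(i)>\omega(k)\}$; $[m]=\{1,\dots,m\}$. For $i$ with $c_i(\omega)>0$ and $x\in[c_i(\omega)]$, $m_{i,x}(\omega)\in\mathbb{N}^n$ has $j$-th coordinate $0$ if $j<i$; $x$ if $j=i$; $0$ if $j>i$ and $(i,j)\in{\rm Inv}(\omega)$; $\max\{0,x-c_{i,j}(\omega)\}$ if $j>i$ and $(i,j)\notin{\rm Inv}(\omega)$. Comparisons $<,>$ are strict comparisons in the product order on $\mathbb{N}^n$ ($u\le v$ iff $u_k\le v_k$ for all $k$). *)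

theory Defs
  imports "HOL-Combinatorics.Permutations"
begin

text \<open>Permutations of [n] = {1..n}, vectors in N^n are functions nat => nat
  whose coordinates 1..n are relevant.\<close>

definition inv_set :: "nat \<Rightarrow> (nat \<Rightarrow> nat) \<Rightarrow> (nat \<times> nat) set" where
  "inv_set n w = {(i,j). 1 \<le> i \<and> i < j \<and> j \<le> n \<and> w i > w j}"

definition code :: "nat \<Rightarrow> (nat \<Rightarrow> nat) \<Rightarrow> nat \<Rightarrow> nat" where
  "code n w i = card {j. i < j \<and> j \<le> n \<and> w i > w j}"

definition code_between :: "(nat \<Rightarrow> nat) \<Rightarrow> nat \<Rightarrow> nat \<Rightarrow> nat" where
  "code_between w i j = card {k. i < k \<and> k < j \<and> w i > w k}"

definition mvec :: "nat \<Rightarrow> (nat \<Rightarrow> nat) \<Rightarrow> nat \<Rightarrow> nat \<Rightarrow> (nat \<Rightarrow> nat)" where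
  "mvec n w i x = (\<lambda>j. if j < i then 0
                        else if j = i then x
                        else if (i,j) \<in> inv_set n w then 0
                        else x - code_between w i j)"

definition vle :: "nat \<Rightarrow> (nat \<Rightarrow> nat) \<Rightarrow> (nat \<Rightarrow> nat) \<Rightarrow> bool" where
  "vle n u v = (\<forall>k\<in>{1..n}. u k \<le> v k)"

definition vless :: "nat \<Rightarrow> (nat \<Rightarrow> nat) \<Rightarrow> (nat \<Rightarrow> nat) \<Rightarrow> bool" where
  "vless n u v = (vle n u v \<and> (\<exists>k\<in>{1..n}. u k \<noteq> v k))"

end

theory Submission
  imports Defs
begin

lemma cb_split:
  assumes "i < j" "j < k" "\<not> w j < w i"
  shows "code_between w i k \<le> code_between w i j + code_between w j k"
proof -
  have "{l. i < l \<and> l < k \<and> w i > w l} \<subseteq> {l. i < l \<and> l < j \<and> w i > w l} \<union> {l. j < l \<and> l < k \<and> w j > w l}"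
    using assms by auto (metis less_le_trans not_less_iff_gr_or_eq)
  hence "card {l. i < l \<and> l < k \<and> w i > w l} \<le> card ({l. i < l \<and> l < j \<and> w i > w l} \<union> {l. j < l \<and> l < k \<and> w j > w l})"
    by (intro card_mono) auto
  also have "\<dots> \<le> card {l. i < l \<and> l < j \<and> w i > w l} + card {l. j < l \<and> l < k \<and> w j > w l}"
    by (rule card_Un_le)
  finally show ?thesis unfolding code_between_def .
qed

lemma mvec_minus1: "mvec n w i (x - 1) k = mvec n w i x k - 1"
  unfolding mvec_def by auto

theorem mainTheorem3:
  fixes n :: nat and w :: "nat \<Rightarrow> nat" and i j a b :: nat
  assumes "w permutes {1..n}"
    and "1 \<le> i" "i < j" "j \<le> n"
    and "code n w i > 0" "code n w j > 0"
    and "a \<in> {1..code n w i}" "b \<in> {1..code n w j}"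
    and "vless n (mvec n w j b) (mvec n w i a)"
  shows "(a \<ge> 2 \<and> b \<ge> 2 \<longrightarrow> vless n (mvec n w j (b - 1)) (mvec n w i (a - 1)))
       \<and> (a < code n w i \<and> b < code n w j \<longrightarrow> vless n (mvec n w j (b + 1)) (mvec n w i (a + 1)))"
proof -
  have le: "\<And>k. k \<in> {1..n} \<Longrightarrow> mvec n w j b k \<le> mvec n w i a k"
    using assms(9) unfolding vless_def vle_def by auto
  have b1: "b \<ge> 1" "a \<ge> 1" using assms(7,8) by auto
  have jj: "b \<le> mvec n w i a j" using le[of j] assms(2-4) by (simp add: mvec_def)
  have nij: "\<not> w j < w i"
  proof
    assume "w j < w i"
    hence "(i,j) \<in> inv_set n w" using assms(2-4) by (simp add: inv_set_def)
    thus False using jj b1 assms(3) by (simp add: mvec_def)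
  qed
  have nij': "(i,j) \<notin> inv_set n w" using nij by (simp add: inv_set_def)
  have cab: "code_between w i j + b \<le> a"
    using jj nij' assms(3) b1 by (simp add: mvec_def)
  have iin: "i \<in> {1..n}" using assms(2-4) by auto
  have P1: "vless n (mvec n w j (b - 1)) (mvec n w i (a - 1))" if "a \<ge> 2"
    unfolding vless_def vle_def
  proof
    show "\<forall>k\<in>{1..n}. mvec n w j (b - 1) k \<le> mvec n w i (a - 1) k"
      using le by (metis mvec_minus1 diff_le_mono)
    show "\<exists>k\<in>{1..n}. mvec n w j (b - 1) k \<noteq> mvec n w i (a - 1) k"
      using iin that assms(3) by (intro bexI[of _ i]) (auto simp: mvec_def)
  qed
  have P2: "vless n (mvec n w j (b + 1)) (mvec n w i (a + 1))"
    unfolding vless_def vle_def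
  proof
    show "\<forall>k\<in>{1..n}. mvec n w j (b + 1) k \<le> mvec n w i (a + 1) k"
    proof
      fix k assume k: "k \<in> {1..n}"
      consider "k < j" | "k = j" | "k > j" by linarith
      thus "mvec n w j (b + 1) k \<le> mvec n w i (a + 1) k"
      proof cases
        case 1 thus ?thesis by (simp add: mvec_def)
      next
        case 2 thus ?thesis using assms(3) nij' cab by (simp add: mvec_def)
      next
        case 3
        show ?thesis
        proof (cases "(j,k) \<in> inv_set n w \<or> b + 1 \<le> code_between w j k")
          case True thus ?thesis using 3 assms(3) by (auto simp: mvec_def)
        next
          case False
          hence "\<not> w k < w j" using 3 k assms(3) by (auto simp: inv_set_def)
          hence "\<not> w k < w i" using nij by auto
          hence nik: "(i,k) \<notin> inv_set n w" by (simp add: inv_set_def)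
          have "code_between w i k \<le> code_between w i j + code_between w j k"
            using cb_split[OF assms(3) 3 nij] .
          thus ?thesis using False nik 3 assms(3) cab by (simp add: mvec_def)
        qed
      qed
    qed
    show "\<exists>k\<in>{1..n}. mvec n w j (b + 1) k \<noteq> mvec n w i (a + 1) k"
      using iin assms(3) by (intro bexI[of _ i]) (auto simp: mvec_def)
  qed
  show ?thesis using P1 P2 by auto
qed

end
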